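(* Let $n,d,a$ be positive integers. If $n\in\Gamma(d)$ and $a\notin\Gamma(d)$, then the triple $(n,d,a)$ is bad.
   Context: Let $R=\mathbb{C}[x_1,\dots,x_n]$ with $\mathfrak{S}_n$ permuting the variables and $R_a^{\mathfrak{S}_n}$ the symmetric polynomials homogeneous of degree $a$. A triple $(n,d,a)$ of positive integers is good if there exists $f\in R_a^{\mathfrak{S}_n}$ such that $x_1^d-x_n^d,\dots,x_{n-1}^d-x_n^d,f$ is a regular sequence (equivalently, $f$ has no zero on $\mathcal{V}_d=\{(z_1,\dots,z_n)\in\mathbb{C}^n: z_i^d=1\ \forall i,\ z_n=1\}$); otherwise it is bad. For a positive integer $m$, $\Gamma(m)$ is the numerical semigroup generated by the prime divisors of $m$, with $\Gamma(1)=\{0\}$. *)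

theory Defs
  imports Complex_Main "HOL-Combinatorics.Permutations" "HOL-Computational_Algebra.Primes"
begin

text \<open>Points of C^n are functions nat => complex (coordinates indexed 0..n-1, zero beyond).
  A polynomial in R_a (homogeneous of degree a in n variables) is given by its coefficient
  function on exponent vectors; only exponent vectors in hmonos n a matter.\<close>

definition hmonos :: "nat \<Rightarrow> nat \<Rightarrow> (nat \<Rightarrow> nat) set" where
  "hmonos n a = {\<alpha>. (\<forall>i\<ge>n. \<alpha> i = 0) \<and> (\<Sum>i<n. \<alpha> i) = a}"

definition hpoly_eval :: "nat \<Rightarrow> nat \<Rightarrow> ((nat \<Rightarrow> nat) \<Rightarrow> complex) \<Rightarrow> (nat \<Rightarrow> complex) \<Rightarrow> complex" where
  "hpoly_eval n a c z = (\<Sum>\<alpha>\<in>hmonos n a. c \<alpha> * (\<Prod>i<n. z i ^ \<alpha> i))"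

definition hpoly_symmetric :: "nat \<Rightarrow> nat \<Rightarrow> ((nat \<Rightarrow> nat) \<Rightarrow> complex) \<Rightarrow> bool" where
  "hpoly_symmetric n a c \<longleftrightarrow>
     (\<forall>\<sigma> \<alpha>. \<sigma> permutes {..<n} \<longrightarrow> \<alpha> \<in> hmonos n a \<longrightarrow> c (\<alpha> \<circ> \<sigma>) = c \<alpha>)"

definition V :: "nat \<Rightarrow> nat \<Rightarrow> (nat \<Rightarrow> complex) set" where
  "V n d = {z. (\<forall>i<n. z i ^ d = 1) \<and> z (n - 1) = 1 \<and> (\<forall>i\<ge>n. z i = 0)}"

definition good_triple :: "nat \<Rightarrow> nat \<Rightarrow> nat \<Rightarrow> bool" where
  "good_triple n d a \<longleftrightarrow>
     (\<exists>c. hpoly_symmetric n a c \<and> (\<forall>z\<in>V n d. hpoly_eval n a c z \<noteq> 0))"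

definition bad_triple :: "nat \<Rightarrow> nat \<Rightarrow> nat \<Rightarrow> bool" where
  "bad_triple n d a \<longleftrightarrow> \<not> good_triple n d a"

text \<open>Numerical semigroup generated by the prime divisors of m (Gamma 1 = {0}).\<close>
definition Gamma :: "nat \<Rightarrow> nat set" where
  "Gamma m = {k. \<exists>g::nat \<Rightarrow> nat. k = (\<Sum>p\<in>prime_factors m. g p * p)}"

end

theory Submission imports Defs "HOL-Analysis.Complex_Transcendental" "HOL-Number_Theory.Cong"
begin

definition zeta :: "nat \<Rightarrow> complex" where
  "zeta p = exp (2 * of_real pi * \<i> / of_nat p)"

lemma zeta_pow: "zeta p ^ j = exp (2 * of_real pi * \<i> * of_nat j / of_nat p)"
  unfolding zeta_def exp_of_nat_mult[symmetric] by (simp add: field_simps)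

lemma zeta_pow_eq_1: "1 \<le> p \<Longrightarrow> zeta p ^ j = 1 \<longleftrightarrow> p dvd j"
  unfolding zeta_pow by (rule complex_root_unity_eq_1)

lemma zeta_pow_mod: assumes "1 \<le> p" shows "zeta p ^ (x mod p) = zeta p ^ x"
proof -
  have "zeta p ^ x = zeta p ^ (p * (x div p) + x mod p)" by simp
  also have "\<dots> = (zeta p ^ p) ^ (x div p) * zeta p ^ (x mod p)"
    by (simp only: power_add power_mult)
  also have "zeta p ^ p = 1" using zeta_pow_eq_1[OF assms] by simp
  finally show ?thesis by simp
qed

lemma zeta_geom: assumes "1 \<le> p" "\<not> p dvd A"
  shows "(\<Sum>u<p. zeta p ^ (u * A)) = 0"
proof -
  define w where "w = zeta p ^ A"
  have w1: "w \<noteq> 1" using zeta_pow_eq_1[OF assms(1)] assms(2) w_def by simp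
  have wp: "w ^ p = 1" unfolding w_def power_mult[symmetric]
    using zeta_pow_eq_1[OF assms(1)] by simp
  have "(\<Sum>u<p. zeta p ^ (u * A)) = (\<Sum>u<p. w ^ u)"
    unfolding w_def by (simp add: power_mult[symmetric] mult.commute)
  also have "\<dots> = 0" using sum_gp_strict[of w p] w1 wp by simp
  finally show ?thesis .
qed

lemma hpoly_eval_perm:
  assumes sym: "hpoly_symmetric n a c" and sg: "\<sigma> permutes {..<n}"
  shows "hpoly_eval n a c (z \<circ> \<sigma>) = hpoly_eval n a c z"
proof -
  let ?H = "hmonos n a"
  have inv: "inv \<sigma> permutes {..<n}" using sg by (rule permutes_inv)
  have memH: "\<beta> \<circ> \<tau> \<in> ?H" if "\<beta> \<in> ?H" "\<tau> permutes {..<n}" for \<beta> \<tau>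
  proof -
    have "(\<Sum>i<n. (\<beta> \<circ> \<tau>) i) = (\<Sum>i<n. \<beta> i)"
      using sum.permute[OF that(2), of \<beta>] by simp
    moreover have "\<forall>i\<ge>n. (\<beta> \<circ> \<tau>) i = 0"
      using that permutes_not_in[OF that(2)] by (auto simp: hmonos_def)
    ultimately show ?thesis using that by (simp add: hmonos_def)
  qed
  have bij: "bij_betw (\<lambda>\<beta>. \<beta> \<circ> \<sigma>) ?H ?H"
  proof (rule bij_betwI[where g = "\<lambda>\<beta>. \<beta> \<circ> inv \<sigma>"])
    show "(\<lambda>\<beta>. \<beta> \<circ> \<sigma>) \<in> ?H \<rightarrow> ?H" using memH sg by auto
    show "(\<lambda>\<beta>. \<beta> \<circ> inv \<sigma>) \<in> ?H \<rightarrow> ?H" using memH inv by auto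
    show "\<beta> \<circ> \<sigma> \<circ> inv \<sigma> = \<beta>" for \<beta>
      using permutes_inverses(1)[OF sg] by (auto simp: fun_eq_iff)
    show "\<beta> \<circ> inv \<sigma> \<circ> \<sigma> = \<beta>" for \<beta>
      using permutes_inverses(2)[OF sg] by (auto simp: fun_eq_iff)
  qed
  have "hpoly_eval n a c (z \<circ> \<sigma>) = (\<Sum>\<alpha>\<in>?H. c \<alpha> * (\<Prod>i<n. z (\<sigma> i) ^ \<alpha> i))"
    unfolding hpoly_eval_def by simp
  also have "\<dots> = (\<Sum>\<beta>\<in>?H. c (\<beta> \<circ> \<sigma>) * (\<Prod>i<n. z (\<sigma> i) ^ (\<beta> \<circ> \<sigma>) i))"
    using sum.reindex_bij_betw[OF bij, of "\<lambda>\<alpha>. c \<alpha> * (\<Prod>i<n. z (\<sigma> i) ^ \<alpha> i)"] by simp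
  also have "\<dots> = (\<Sum>\<beta>\<in>?H. c \<beta> * (\<Prod>i<n. z i ^ \<beta> i))"
  proof (rule sum.cong[OF refl])
    fix \<beta> assume b: "\<beta> \<in> ?H"
    have "c (\<beta> \<circ> \<sigma>) = c \<beta>" using sym sg b unfolding hpoly_symmetric_def by blast
    moreover have "(\<Prod>i<n. z (\<sigma> i) ^ (\<beta> \<circ> \<sigma>) i) = (\<Prod>i<n. z i ^ \<beta> i)"
      using prod.permute[OF sg, of "\<lambda>i. z i ^ \<beta> i"] by (simp add: comp_def)
    ultimately show "c (\<beta> \<circ> \<sigma>) * (\<Prod>i<n. z (\<sigma> i) ^ (\<beta> \<circ> \<sigma>) i) = c \<beta> * (\<Prod>i<n. z i ^ \<beta> i)"
      by simp
  qed
  also have "\<dots> = hpoly_eval n a c z" unfolding hpoly_eval_def ..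
  finally show ?thesis .
qed

lemma gamma_list:
  fixes Q :: "nat set" and g :: "nat \<Rightarrow> nat"
  assumes "finite Q"
  shows "\<exists>xs. set xs \<subseteq> Q \<and> sum_list xs = (\<Sum>q\<in>Q. g q * q)"
  using assms
proof (induction Q rule: finite_induct)
  case empty then show ?case by auto
next
  case (insert x Q)
  then obtain xs where "set xs \<subseteq> Q" "sum_list xs = (\<Sum>q\<in>Q. g q * q)" by blast
  then show ?case using insert
    by (intro exI[of _ "replicate (g x) x @ xs"]) (auto simp: sum_list_replicate)
qed

lemma main_blocks:
  fixes m d n a :: nat and p :: "nat \<Rightarrow> nat" and c
  assumes pr: "\<And>l. l < m \<Longrightarrow> prime (p l) \<and> p l dvd d"
    and nsum: "n = (\<Sum>l<m. p l)" and n0: "0 < n" and d0: "0 < d"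
    and aG: "a \<notin> Gamma d" and sym: "hpoly_symmetric n a c"
  shows "\<exists>z\<in>V n d. hpoly_eval n a c z = 0"
proof -
  define s where "s j = (\<Sum>l<j. p l)" for j
  define S where "S = Sigma {..<m} (\<lambda>j. {..<p j})"
  define \<phi> where "\<phi> = (\<lambda>(j,k). s j + k)"
  have p1: "1 \<le> p l" if "l<m" for l using pr[OF that] prime_ge_1_nat by blast
  have sSuc: "s (Suc j) = s j + p j" for j by (simp add: s_def)
  have smono0: "s j \<le> s j'" if "j \<le> j'" for j j'
    unfolding s_def using that by (intro sum_mono2) auto
  have smono: "s j + p j \<le> s j'" if "j < j'" for j j'
    using smono0[of "Suc j" j'] that sSuc by simp
  have sm: "s m = n" using nsum s_def by simp
  have finS: "finite S" unfolding S_def by simp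
  have Smem: "\<exists>j k. x = (j,k) \<and> j<m \<and> k < p j" if "x \<in> S" for x
    using that unfolding S_def by (cases x) auto
  have phi_in: "\<phi> x \<in> {..<n}" if xS: "x \<in> S" for x
  proof -
    obtain j k where x: "x = (j,k)" "j<m" "k < p j" using Smem[OF xS] by blast
    have "s j + p j \<le> s m" using smono0[of "Suc j" m] sSuc x by simp
    then show ?thesis using x sm by (simp add: \<phi>_def)
  qed
  have inj: "inj_on \<phi> S"
  proof (rule inj_onI)
    fix x y assume x: "x \<in> S" and y: "y \<in> S" and e: "\<phi> x = \<phi> y"
    obtain j k where xx: "x = (j,k)" "j<m" "k < p j" using Smem[OF x] by blast
    obtain j' k' where yy: "y = (j',k')" "j'<m" "k' < p j'" using Smem[OF y] by blast
    have e': "s j + k = s j' + k'" using e xx yy by (simp add: \<phi>_def)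
    have "j = j'"
    proof (rule ccontr)
      assume "j \<noteq> j'"
      then consider "j < j'" | "j' < j" by linarith
      then show False
      proof cases
        case 1 then show ?thesis using smono[OF 1] e' xx by simp
      next
        case 2 then show ?thesis using smono[OF 2] e' yy by simp
      qed
    qed
    then show "x = y" using e' xx yy by simp
  qed
  have cardS: "card S = n" unfolding S_def using nsum by (simp add: card_SigmaI)
  have bijphi: "bij_betw \<phi> S {..<n}"
  proof -
    have "\<phi> ` S = {..<n}"
      apply (rule card_subset_eq)
      using phi_in card_image[OF inj] cardS by auto
    then show ?thesis using inj by (simp add: bij_betw_def)
  qed
  define \<psi> where "\<psi> = inv_into S \<phi>"
  have bijpsi: "bij_betw \<psi> {..<n} S" by (simp add: \<psi>_def bij_betw_inv_into bijphi)
  have psiphi: "\<psi> (\<phi> x) = x" if "x\<in>S" for x using inv_into_f_f[OF inj that] \<psi>_def by simp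
  have phipsi: "\<phi> (\<psi> i) = i" if "i<n" for i
    using bijphi that unfolding \<psi>_def bij_betw_def by (simp add: f_inv_into_f)
  have psiS: "\<psi> i \<in> S" if "i < n" for i using bijpsi that by (auto simp: bij_betw_def)
  define Z where "Z = (\<lambda>(j,k). zeta (p j) ^ (k+1))"
  define z where "z i = (if i<n then Z (\<psi> i) else 0)" for i
  have zV: "z \<in> V n d"
  proof -
    have "z i ^ d = 1" if iN: "i < n" for i
    proof -
      obtain j k where jk: "\<psi> i = (j,k)" "j<m" "k<p j" using Smem[OF psiS[OF iN]] by blast
      have "z i = zeta (p j) ^ (k+1)" using iN jk by (simp add: z_def Z_def)
      then have "z i ^ d = zeta (p j) ^ ((k+1)*d)" by (simp only: power_mult)
      also have "\<dots> = 1" using zeta_pow_eq_1[OF p1[OF jk(2)]] pr[OF jk(2)] by simp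
      finally show ?thesis .
    qed
    moreover have "z (n-1) = 1"
    proof -
      have m0: "0 < m" using n0 nsum by (cases m) auto
      define j0 where "j0 = m - 1"
      have j0: "j0 < m" "Suc j0 = m" using m0 j0_def by auto
      have inS: "(j0, p j0 - 1) \<in> S" using p1[OF j0(1)] j0 unfolding S_def by auto
      have "\<phi> (j0, p j0 - 1) = n - 1" using sSuc[of j0] j0 sm p1[OF j0(1)] by (simp add: \<phi>_def)
      then have "\<psi> (n-1) = (j0, p j0 - 1)" using psiphi[OF inS] by simp
      then have "z (n-1) = zeta (p j0) ^ (p j0 - 1 + 1)" using n0 by (simp add: z_def Z_def del: One_nat_def)
      also have "p j0 - 1 + 1 = p j0" using p1[OF j0(1)] by simp
      finally show ?thesis using zeta_pow_eq_1[OF p1[OF j0(1)]] by simp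
    qed
    ultimately show ?thesis by (auto simp: V_def z_def)
  qed
  define T where "T = PiE {..<m} (\<lambda>j. {..<p j})"
  define \<tau> where "\<tau> t = (\<lambda>(j,k). (j, (k + t j) mod p j))" for t :: "nat \<Rightarrow> nat"
  define \<sigma> where "\<sigma> t i = (if i < n then \<phi> (\<tau> t (\<psi> i)) else i)" for t i
  have tauS: "bij_betw (\<tau> t) S S" for t
  proof -
    have sub: "\<tau> t ` S \<subseteq> S"
      using p1 by (auto simp: S_def \<tau>_def)
    have "inj_on (\<tau> t) S"
    proof (rule inj_onI)
      fix x y assume x: "x \<in> S" and y: "y \<in> S" and e: "\<tau> t x = \<tau> t y"
      obtain j k where xx: "x = (j,k)" "j<m" "k < p j" using Smem[OF x] by blast
      obtain j' k' where yy: "y = (j',k')" "j'<m" "k' < p j'" using Smem[OF y] by blast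
      have jj: "j = j'" and "(k + t j) mod p j = (k' + t j) mod p j" using e xx yy by (auto simp: \<tau>_def)
      then have "[k + t j = k' + t j] (mod p j)" by (simp add: cong_def)
      then have "[k = k'] (mod p j)" by (simp add: cong_add_rcancel_nat)
      then have "k = k'" using xx yy jj by (simp add: cong_def)
      then show "x = y" using xx yy jj by simp
    qed
    then show ?thesis using endo_inj_surj[OF finS sub] by (simp add: bij_betw_def)
  qed
  have sigma_perm: "\<sigma> t permutes {..<n}" for t
  proof (rule bij_imp_permutes)
    have "bij_betw (\<phi> \<circ> (\<tau> t \<circ> \<psi>)) {..<n} {..<n}"
      using bij_betw_trans[OF bij_betw_trans[OF bijpsi tauS] bijphi] .
    then show "bij_betw (\<sigma> t) {..<n} {..<n}"
      by (rule bij_betw_cong[THEN iffD1, rotated]) (simp add: \<sigma>_def)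
    show "x \<notin> {..<n} \<Longrightarrow> \<sigma> t x = x" for x by (simp add: \<sigma>_def)
  qed
  have zsig: "z (\<sigma> t i) = zeta (p (fst (\<psi> i))) ^ (t (fst (\<psi> i))) * z i" if iN: "i<n" for t i
  proof -
    obtain j k where jk: "\<psi> i = (j,k)" "j<m" "k<p j" using Smem[OF psiS[OF iN]] by blast
    have inS: "(j, (k + t j) mod p j) \<in> S" using jk p1[OF jk(2)] by (auto simp: S_def)
    have si: "\<sigma> t i = \<phi> (j, (k + t j) mod p j)" using that jk by (simp add: \<sigma>_def \<tau>_def)
    have "z (\<sigma> t i) = zeta (p j) ^ ((k + t j) mod p j + 1)"
      using si phi_in[OF inS] psiphi[OF inS] by (simp add: z_def Z_def)
    also have "\<dots> = zeta (p j) ^ (k + t j) * zeta (p j)"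
      using zeta_pow_mod[OF p1[OF jk(2)]] by simp
    also have "\<dots> = zeta (p j) ^ (t j) * z i" using that jk
      by (simp add: z_def Z_def power_add)
    finally show ?thesis using jk by simp
  qed
  define A where "A \<alpha> j = (\<Sum>k<p j. \<alpha> (s j + k))" for \<alpha> :: "nat \<Rightarrow> nat" and j
  have Eexp: "(\<Prod>i<n. zeta (p (fst (\<psi> i))) ^ (t (fst (\<psi> i)) * \<alpha> i))
      = (\<Prod>j<m. zeta (p j) ^ (t j * A \<alpha> j))" for t \<alpha>
  proof -
    define G where "G = (\<lambda>(j,k). zeta (p j) ^ (t j * \<alpha> (\<phi> (j,k))))"
    have "(\<Prod>i<n. zeta (p (fst (\<psi> i))) ^ (t (fst (\<psi> i)) * \<alpha> i)) = (\<Prod>i<n. G (\<psi> i))"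
    proof (rule prod.cong[OF refl])
      fix i assume "i \<in> {..<n}"
      then have "\<phi> (\<psi> i) = i" using phipsi by simp
      then show "zeta (p (fst (\<psi> i))) ^ (t (fst (\<psi> i)) * \<alpha> i) = G (\<psi> i)"
        unfolding G_def by (cases "\<psi> i") simp
    qed
    also have "\<dots> = prod G S" by (rule prod.reindex_bij_betw[OF bijpsi])
    also have "\<dots> = (\<Prod>j<m. \<Prod>k<p j. G (j,k))"
      unfolding S_def by (subst prod.Sigma) (auto simp: case_prod_beta')
    also have "\<dots> = (\<Prod>j<m. zeta (p j) ^ (t j * A \<alpha> j))"
      by (simp add: G_def \<phi>_def A_def sum_distrib_left power_sum)
    finally show ?thesis .
  qed
  have evalsig: "hpoly_eval n a c (z \<circ> \<sigma> t) = (\<Sum>\<alpha>\<in>hmonos n a. c \<alpha> * (\<Prod>i<n. z i ^ \<alpha> i)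
      * (\<Prod>j<m. zeta (p j) ^ (t j * A \<alpha> j)))" for t
    unfolding hpoly_eval_def
  proof (rule sum.cong[OF refl])
    fix \<alpha> assume "\<alpha> \<in> hmonos n a"
    have "(\<Prod>i<n. (z \<circ> \<sigma> t) i ^ \<alpha> i)
        = (\<Prod>i<n. z i ^ \<alpha> i * zeta (p (fst (\<psi> i))) ^ (t (fst (\<psi> i)) * \<alpha> i))"
    proof (rule prod.cong[OF refl])
      fix i assume "i \<in> {..<n}"
      then have "(z \<circ> \<sigma> t) i ^ \<alpha> i = (zeta (p (fst (\<psi> i))) ^ (t (fst (\<psi> i)))) ^ \<alpha> i * z i ^ \<alpha> i"
        by (simp add: zsig power_mult_distrib)
      also have "\<dots> = z i ^ \<alpha> i * zeta (p (fst (\<psi> i))) ^ (t (fst (\<psi> i)) * \<alpha> i)"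
        by (simp only: power_mult[symmetric] mult.commute)
      finally show "(z \<circ> \<sigma> t) i ^ \<alpha> i = z i ^ \<alpha> i * zeta (p (fst (\<psi> i))) ^ (t (fst (\<psi> i)) * \<alpha> i)" .
    qed
    also have "\<dots> = (\<Prod>i<n. z i ^ \<alpha> i) * (\<Prod>j<m. zeta (p j) ^ (t j * A \<alpha> j))"
      by (simp add: prod.distrib Eexp)
    finally show "c \<alpha> * (\<Prod>i<n. (z \<circ> \<sigma> t) i ^ \<alpha> i) =
       c \<alpha> * (\<Prod>i<n. z i ^ \<alpha> i) * (\<Prod>j<m. zeta (p j) ^ (t j * A \<alpha> j))" by simp
  qed
  have nondiv: "\<exists>j<m. \<not> p j dvd A \<alpha> j" if aH: "\<alpha> \<in> hmonos n a" for \<alpha>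
  proof (rule ccontr)
    assume "\<not> ?thesis"
    then have dv: "\<And>j. j < m \<Longrightarrow> p j dvd A \<alpha> j" by blast
    have "a = (\<Sum>i<n. \<alpha> i)" using aH by (simp add: hmonos_def)
    also have "\<dots> = (\<Sum>x\<in>S. \<alpha> (\<phi> x))" by (rule sum.reindex_bij_betw[OF bijphi, symmetric])
    also have "\<dots> = (\<Sum>j<m. A \<alpha> j)"
      unfolding S_def A_def by (subst sum.Sigma) (auto simp: \<phi>_def case_prod_beta')
    finally have aA: "a = (\<Sum>j<m. A \<alpha> j)" .
    define g where "g q = (\<Sum>j\<in>{j. j \<in> {..<m} \<and> p j = q}. A \<alpha> j div q)" for q
    have "(\<Sum>q\<in>prime_factors d. g q * q)
        = (\<Sum>q\<in>prime_factors d. \<Sum>j\<in>{j. j \<in> {..<m} \<and> p j = q}. A \<alpha> j)"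
      unfolding g_def sum_distrib_right
      by (intro sum.cong refl) (use dv in auto)
    also have "\<dots> = (\<Sum>j<m. A \<alpha> j)"
      by (rule sum.group) (use pr d0 in \<open>auto simp: in_prime_factors_iff\<close>)
    finally have "a = (\<Sum>q\<in>prime_factors d. g q * q)" using aA by simp
    then have "a \<in> Gamma d" unfolding Gamma_def by blast
    then show False using aG by simp
  qed
  have charsum: "(\<Sum>t\<in>T. \<Prod>j<m. zeta (p j) ^ (t j * A \<alpha> j)) = 0" if aH: "\<alpha> \<in> hmonos n a" for \<alpha>
  proof -
    obtain j0 where j0: "j0 < m" "\<not> p j0 dvd A \<alpha> j0" using nondiv[OF aH] by blast
    have "(\<Sum>t\<in>T. \<Prod>j<m. zeta (p j) ^ (t j * A \<alpha> j)) = (\<Prod>j<m. \<Sum>u<p j. zeta (p j) ^ (u * A \<alpha> j))"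
      unfolding T_def by (rule prod_sum_PiE[symmetric]) auto
    also have "\<dots> = 0"
      by (rule prod_zero) (use j0 zeta_geom p1 in auto)
    finally show ?thesis .
  qed
  have finT: "finite T" unfolding T_def by (simp add: finite_PiE)
  have cardT: "card T \<noteq> 0" unfolding T_def using p1 by (simp add: card_PiE Suc_le_eq)
  have "of_nat (card T) * hpoly_eval n a c z = (\<Sum>t\<in>T. hpoly_eval n a c (z \<circ> \<sigma> t))"
    using hpoly_eval_perm[OF sym sigma_perm] by simp
  also have "\<dots> = (\<Sum>\<alpha>\<in>hmonos n a. c \<alpha> * (\<Prod>i<n. z i ^ \<alpha> i) *
      (\<Sum>t\<in>T. \<Prod>j<m. zeta (p j) ^ (t j * A \<alpha> j)))"
    unfolding evalsig by (subst sum.swap) (simp add: sum_distrib_left)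
  also have "\<dots> = 0" using charsum by simp
  finally have "hpoly_eval n a c z = 0" using cardT by simp
  then show ?thesis using zV by blast
qed

theorem proposition3p14:
  fixes n d a :: nat
  assumes "0 < n" and "0 < d" and "0 < a"
    and "n \<in> Gamma d" and "a \<notin> Gamma d"
  shows "bad_triple n d a"
proof -
  obtain g :: "nat \<Rightarrow> nat" where ng: "n = (\<Sum>p\<in>prime_factors d. g p * p)"
    using assms(4) unfolding Gamma_def by blast
  obtain xs where xs: "set xs \<subseteq> prime_factors d" "sum_list xs = n"
    using gamma_list[of "prime_factors d" g] ng by auto
  have pr: "prime (xs ! l) \<and> xs ! l dvd d" if "l < length xs" for l
    using xs(1) nth_mem[OF that] by (auto simp: in_prime_factors_iff)
  have nsum: "n = (\<Sum>l<length xs. xs ! l)"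
    using xs(2) by (simp add: sum_list_sum_nth atLeast0LessThan)
  show ?thesis unfolding bad_triple_def good_triple_def
    using main_blocks[OF pr nsum assms(1,2,5)] by blast
qed

end
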